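(* Let $E$ be a complex vector space of dimension $e$, let $U$ be a complex orthogonal vector space of dimension $2k+1$ ($k\ge1$), and let $V=\operatorname{Sym}(E\otimes U)$ with the commuting actions of $\mathfrak{g}=\mathfrak{so}(U)$ and $H=\mathfrak{gl}(E)$. Write $U=\mathbf{C}\oplus(U_1\oplus U_1^* )\oplus\cdots\oplus(U_k\oplus U_k^* )$, where $U_i,U_i^*$ are isotropic lines paired by the form, $\mathbf{C}$ is a non-isotropic line, and the summands are mutually orthogonal; let the Cartan subalgebra of $\mathfrak{so}(U)$ be the elements preserving each of these lines, with weights identified with $k$-tuples via $\varepsilon_i$ = weight on $U_i$. For $n\in\mathbf{Z}$ let $L_n=\bigoplus_{d\ge0}\operatorname{Sym}^d(E)\otimes\operatorname{Sym}^{d+n}(E)$ (with $\operatorname{Sym}^m=0$ for $m<0$). Then for every $\chi\in\mathbf{Z}^k$, as $H$-representations, \[ V_\chi\cong \operatorname{Sym}(E)\otimes L_{\chi_1}\otimes\cdots\otimes L_{\chi_k}. \]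
   Context: $V_\chi$ denotes the $\chi$-weight space of $V$ for the Cartan subalgebra described in the claim. *)

theory Defs
  imports Complex_Main "HOL-Library.Poly_Mapping"
begin

(* Polynomials (= symmetric algebras) over complex numbers in variables of type 'v:
   finitely supported maps from monomials (exponent vectors 'v \<Rightarrow>\<^sub>0 nat) to coefficients. *)
type_synonym 'v cpoly = "('v \<Rightarrow>\<^sub>0 nat) \<Rightarrow>\<^sub>0 complex"

(* polynomials only involving variables from the set S; Sym(span S) *)
definition polys_in :: "'v set \<Rightarrow> 'v cpoly set" where
  "polys_in S = {f. \<forall>m \<in> Poly_Mapping.keys f. Poly_Mapping.keys m \<subseteq> S}"

definition pvar :: "'v \<Rightarrow> 'v cpoly" where
  "pvar v = Poly_Mapping.single (Poly_Mapping.single v 1) 1"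

definition psmult :: "complex \<Rightarrow> 'v cpoly \<Rightarrow> 'v cpoly" where
  "psmult c f = Poly_Mapping.map (\<lambda>x. c * x) f"

definition pderivv :: "'v \<Rightarrow> 'v cpoly \<Rightarrow> 'v cpoly" where
  "pderivv v f = Abs_poly_mapping
     (\<lambda>m::'v \<Rightarrow>\<^sub>0 nat. of_nat (Suc (Poly_Mapping.lookup m v)) * Poly_Mapping.lookup f (m + Poly_Mapping.single v 1))"

(* The derivation of Sym(span S) extending the linear endomorphism D of span S,
   D(x_v) = \<Sum>_w D w v x_w.  This is how a Lie algebra acting on span S acts on
   the symmetric algebra. *)
definition vfact :: "'v set \<Rightarrow> ('v \<Rightarrow> 'v \<Rightarrow> complex) \<Rightarrow> 'v cpoly \<Rightarrow> 'v cpoly" where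
  "vfact S D f = (\<Sum>v\<in>S. \<Sum>w\<in>S. psmult (D w v) (pvar w * pderivv v f))"

(* Basis of U (dim 2k+1): Z spans the non-isotropic line C, P i spans U_i, M i spans U_i^* *)
datatype uidx = Z | P nat | M nat

definition Uidx :: "nat \<Rightarrow> uidx set" where
  "Uidx k = {Z} \<union> P ` {..<k} \<union> M ` {..<k}"

fun Bform :: "uidx \<Rightarrow> uidx \<Rightarrow> complex" where
  "Bform Z Z = 1"
| "Bform (P i) (M j) = (if i = j then 1 else 0)"
| "Bform (M i) (P j) = (if i = j then 1 else 0)"
| "Bform _ _ = 0"

(* so(U): matrices X (X u' u = coefficient of basis vector u' in X(u)) supported on
   Uidx k and skew for B *)
definition soU :: "nat \<Rightarrow> (uidx \<Rightarrow> uidx \<Rightarrow> complex) set" where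
  "soU k = {X. (\<forall>u v. (u \<notin> Uidx k \<or> v \<notin> Uidx k) \<longrightarrow> X u v = 0) \<and>
     (\<forall>u\<in>Uidx k. \<forall>v\<in>Uidx k.
        (\<Sum>w\<in>Uidx k. X w u * Bform w v) + (\<Sum>w\<in>Uidx k. Bform u w * X w v) = 0)}"

definition cartan :: "nat \<Rightarrow> (uidx \<Rightarrow> uidx \<Rightarrow> complex) set" where
  "cartan k = {X \<in> soU k. \<forall>u v. u \<noteq> v \<longrightarrow> X u v = 0}"

(* the weight chi = \<Sum> chi_i \<epsilon>_i, where \<epsilon>_i(X) = eigenvalue of X on U_i *)
definition wt :: "nat \<Rightarrow> (nat \<Rightarrow> int) \<Rightarrow> (uidx \<Rightarrow> uidx \<Rightarrow> complex) \<Rightarrow> complex" where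
  "wt k \<chi> X = (\<Sum>i<k. of_int (\<chi> i) * X (P i) (P i))"

(* V = Sym(E \<otimes> U), E = C^e with basis {..<e}; variable (a,u) is e_a \<otimes> u *)
definition EUvars :: "nat \<Rightarrow> nat \<Rightarrow> (nat \<times> uidx) set" where
  "EUvars e k = {..<e} \<times> Uidx k"

definition Vspace :: "nat \<Rightarrow> nat \<Rightarrow> (nat \<times> uidx) cpoly set" where
  "Vspace e k = polys_in (EUvars e k)"

(* action of gl(E) on E \<otimes> X (A b a = coefficient of e_b in A(e_a)), on the E-factor *)
definition glE_on :: "(nat \<Rightarrow> nat \<Rightarrow> complex) \<Rightarrow> (nat \<times> 'u) \<Rightarrow> (nat \<times> 'u) \<Rightarrow> complex" where
  "glE_on A w v = (if snd w = snd v then A (fst w) (fst v) else 0)"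

definition soU_on :: "(uidx \<Rightarrow> uidx \<Rightarrow> complex) \<Rightarrow> (nat \<times> uidx) \<Rightarrow> (nat \<times> uidx) \<Rightarrow> complex" where
  "soU_on X w v = (if fst w = fst v then X (snd w) (snd v) else 0)"

definition Vweight :: "nat \<Rightarrow> nat \<Rightarrow> (nat \<Rightarrow> int) \<Rightarrow> (nat \<times> uidx) cpoly set" where
  "Vweight e k \<chi> = {f \<in> Vspace e k. \<forall>X \<in> cartan k.
      vfact (EUvars e k) (soU_on X) f = psmult (wt k \<chi> X) f}"

(* Model of Sym(E) \<otimes> L_{chi_1} \<otimes> ... \<otimes> L_{chi_k}.
   Tensor factors: S0 = the factor Sym(E); L1 i / L2 i = the two factors
   Sym^d(E), Sym^(d+chi_i)(E) of L_{chi_i}.  A tensor product of symmetric algebras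
   of spaces is the symmetric algebra of their direct sum, i.e. polynomials in the
   union of the variables; L_n is the span of bihomogeneous polynomials of bidegree
   (d, d+n), d \<ge> 0, in the two variable blocks. *)
datatype tidx = S0 | L1 nat | L2 nat

definition Tidx :: "nat \<Rightarrow> tidx set" where
  "Tidx k = {S0} \<union> L1 ` {..<k} \<union> L2 ` {..<k}"

definition ETvars :: "nat \<Rightarrow> nat \<Rightarrow> (nat \<times> tidx) set" where
  "ETvars e k = {..<e} \<times> Tidx k"

definition blkdeg :: "((nat \<times> 'u) \<Rightarrow>\<^sub>0 nat) \<Rightarrow> 'u \<Rightarrow> nat" where
  "blkdeg m t = (\<Sum>v\<in>{v \<in> Poly_Mapping.keys m. snd v = t}. Poly_Mapping.lookup m v)"

definition Lspace :: "nat \<Rightarrow> nat \<Rightarrow> (nat \<Rightarrow> int) \<Rightarrow> (nat \<times> tidx) cpoly set" where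
  "Lspace e k \<chi> = {f \<in> polys_in (ETvars e k). \<forall>m \<in> Poly_Mapping.keys f. \<forall>i<k.
      int (blkdeg m (L2 i)) = int (blkdeg m (L1 i)) + \<chi> i}"

end

theory Submission
  imports Defs
begin

lemma lookup_map_key:
  assumes [transfer_rule]: "inj f"
  shows "Poly_Mapping.lookup (Poly_Mapping.map_key f p) k = Poly_Mapping.lookup p (f k)"
  by transfer simp

lemma lookup_psmult: "Poly_Mapping.lookup (psmult c f) m = c * Poly_Mapping.lookup f m"
  unfolding psmult_def by transfer (simp add: when_def)

lemma lookup_pvar_mult:
  "Poly_Mapping.lookup (pvar w * g) m =
    (if 0 < Poly_Mapping.lookup m w then Poly_Mapping.lookup g (m - Poly_Mapping.single w 1) else 0)"
proof -
  have "Poly_Mapping.lookup (pvar w * g) m =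
     (\<Sum>q. Poly_Mapping.lookup g q when m = Poly_Mapping.single w 1 + q)"
    unfolding pvar_def lookup_mult lookup_single by (simp add: when_mult)
  also have "\<dots> = (if 0 < Poly_Mapping.lookup m w then Poly_Mapping.lookup g (m - Poly_Mapping.single w 1) else 0)"
  proof (cases "0 < Poly_Mapping.lookup m w")
    case True
    have "\<And>q. (m = Poly_Mapping.single w 1 + q) = (q = m - Poly_Mapping.single w 1)"
    proof -
      fix q
      have "m = Poly_Mapping.single w 1 + q \<longleftrightarrow> (\<forall>x. Poly_Mapping.lookup m x = Poly_Mapping.lookup (Poly_Mapping.single w 1) x + Poly_Mapping.lookup q x)"
        by (simp add: poly_mapping_eq_iff fun_eq_iff lookup_add)
      also have "\<dots> \<longleftrightarrow> (\<forall>x. Poly_Mapping.lookup q x = Poly_Mapping.lookup m x - Poly_Mapping.lookup (Poly_Mapping.single w 1) x)"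
        using True by (auto simp: lookup_single when_def)
      also have "\<dots> \<longleftrightarrow> q = m - Poly_Mapping.single w 1"
        by (simp add: poly_mapping_eq_iff fun_eq_iff lookup_minus)
      finally show "?thesis q" .
    qed
    then show ?thesis using True by simp
  next
    case False
    have "\<And>q. m \<noteq> Poly_Mapping.single w 1 + q"
    proof
      fix q assume "m = Poly_Mapping.single w 1 + q"
      then have "Poly_Mapping.lookup m w = 1 + Poly_Mapping.lookup q w" by (simp add: lookup_add)
      then show False using False by simp
    qed
    then show ?thesis using False by simp
  qed
  finally show ?thesis .
qed

lemma finite_pderivv:
  "finite {m. of_nat (Suc (Poly_Mapping.lookup m v)) * Poly_Mapping.lookup f (m + Poly_Mapping.single v 1) \<noteq> (0::complex)}"
proof (rule finite_subset)
  show "finite ((\<lambda>m. m - Poly_Mapping.single v 1) ` Poly_Mapping.keys f)" by simp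
  show "{m. of_nat (Suc (Poly_Mapping.lookup m v)) * Poly_Mapping.lookup f (m + Poly_Mapping.single v 1) \<noteq> (0::complex)}
      \<subseteq> (\<lambda>m. m - Poly_Mapping.single v 1) ` Poly_Mapping.keys f"
  proof
    fix m assume "m \<in> {m. of_nat (Suc (Poly_Mapping.lookup m v)) * Poly_Mapping.lookup f (m + Poly_Mapping.single v 1) \<noteq> (0::complex)}"
    then have "m + Poly_Mapping.single v 1 \<in> Poly_Mapping.keys f" by (simp add: in_keys_iff)
    moreover have "m = (m + Poly_Mapping.single v 1) - Poly_Mapping.single v 1" by simp
    ultimately show "m \<in> (\<lambda>m. m - Poly_Mapping.single v 1) ` Poly_Mapping.keys f" by blast
  qed
qed

lemma lookup_pderivv:
  "Poly_Mapping.lookup (pderivv v f) m = of_nat (Suc (Poly_Mapping.lookup m v)) * Poly_Mapping.lookup f (m + Poly_Mapping.single v 1)"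
  unfolding pderivv_def using finite_pderivv[of v f] by simp

lemma lookup_term:
  "Poly_Mapping.lookup (pvar w * pderivv v f) m =
    (if 0 < Poly_Mapping.lookup m w then of_nat (Suc (Poly_Mapping.lookup (m - Poly_Mapping.single w 1) v)) *
        Poly_Mapping.lookup f (m - Poly_Mapping.single w 1 + Poly_Mapping.single v 1) else 0)"
  by (simp add: lookup_pvar_mult lookup_pderivv)

lemma lookup_vfact:
  "Poly_Mapping.lookup (vfact S D f) m = (\<Sum>v\<in>S. \<Sum>w\<in>S. D w v *
    (if 0 < Poly_Mapping.lookup m w then of_nat (Suc (Poly_Mapping.lookup (m - Poly_Mapping.single w 1) v)) *
        Poly_Mapping.lookup f (m - Poly_Mapping.single w 1 + Poly_Mapping.single v 1) else 0))"
  unfolding vfact_def by (simp add: lookup_sum lookup_psmult lookup_term)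



definition rn :: "('a \<Rightarrow> 'b) \<Rightarrow> 'a cpoly \<Rightarrow> 'b cpoly" where
  "rn r f = Poly_Mapping.map_key (Poly_Mapping.map_key r) f"

locale bpair =
  fixes r :: "'a \<Rightarrow> 'b" and ri :: "'b \<Rightarrow> 'a"
  assumes ri_r[simp]: "ri (r x) = x" and r_ri[simp]: "r (ri y) = y"
begin

lemma inj_r: "inj r" by (metis injI ri_r)

lemma lookup_mk: "Poly_Mapping.lookup (Poly_Mapping.map_key r m) v = Poly_Mapping.lookup m (r v)"
  by (rule lookup_map_key[OF inj_r])

lemma inj_mk: "inj (Poly_Mapping.map_key r :: ('b \<Rightarrow>\<^sub>0 nat) \<Rightarrow> _)"
proof (rule injI)
  fix m1 m2 :: "'b \<Rightarrow>\<^sub>0 nat" assume "Poly_Mapping.map_key r m1 = Poly_Mapping.map_key r m2"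
  then have "\<And>v. Poly_Mapping.lookup m1 (r v) = Poly_Mapping.lookup m2 (r v)"
    by (metis lookup_mk)
  then have "\<And>y. Poly_Mapping.lookup m1 y = Poly_Mapping.lookup m2 y" by (metis r_ri)
  then show "m1 = m2" by (simp add: poly_mapping_eq_iff fun_eq_iff)
qed

lemma lookup_rn: "Poly_Mapping.lookup (rn r f) m = Poly_Mapping.lookup f (Poly_Mapping.map_key r m)"
  unfolding rn_def by (rule lookup_map_key[OF inj_mk])

lemma mk_shift: "Poly_Mapping.map_key r (m - Poly_Mapping.single (r w) 1 + Poly_Mapping.single (r v) 1)
   = Poly_Mapping.map_key r m - Poly_Mapping.single w 1 + Poly_Mapping.single v 1"
  by (rule poly_mapping_eqI) (simp add: lookup_mk lookup_add lookup_minus lookup_single when_def inj_r inj_eq)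

definition tm :: "('c \<Rightarrow>\<^sub>0 nat) \<Rightarrow> 'c \<Rightarrow> 'c \<Rightarrow> 'c cpoly \<Rightarrow> complex" where
  "tm m v w f = (if 0 < Poly_Mapping.lookup m w then of_nat (Suc (Poly_Mapping.lookup (m - Poly_Mapping.single w 1) v)) *
        Poly_Mapping.lookup f (m - Poly_Mapping.single w 1 + Poly_Mapping.single v 1) else 0)"

lemma single_r: "Poly_Mapping.lookup (Poly_Mapping.single (r w) (1::nat)) (r v) = Poly_Mapping.lookup (Poly_Mapping.single w 1) v"
  by (simp add: lookup_single when_def inj_r inj_eq)

lemma tm_r: "tm (Poly_Mapping.map_key r m) v w f = tm m (r v) (r w) (rn r f)"
proof -
  have 1: "Poly_Mapping.lookup (Poly_Mapping.map_key r m) w = Poly_Mapping.lookup m (r w)" by (rule lookup_mk)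
  have 2: "Poly_Mapping.lookup (Poly_Mapping.map_key r m - Poly_Mapping.single w 1) v
     = Poly_Mapping.lookup (m - Poly_Mapping.single (r w) 1) (r v)"
    unfolding lookup_minus lookup_mk single_r ..
  have 3: "Poly_Mapping.lookup (rn r f) (m - Poly_Mapping.single (r w) 1 + Poly_Mapping.single (r v) 1)
     = Poly_Mapping.lookup f (Poly_Mapping.map_key r m - Poly_Mapping.single w 1 + Poly_Mapping.single v 1)"
    unfolding lookup_rn mk_shift ..
  show ?thesis unfolding tm_def 1 2 3 ..
qed

lemma lookup_vfact_tm: "Poly_Mapping.lookup (vfact S D f) m = (\<Sum>v\<in>S. \<Sum>w\<in>S. D w v * tm m v w f)"
  unfolding lookup_vfact tm_def ..

lemma sum2_reindex: "(\<Sum>v'\<in>r ` S. \<Sum>w'\<in>r ` S. F v' w') = (\<Sum>v\<in>S. \<Sum>w\<in>S. F (r v) (r w))"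
proof -
  have inj: "inj_on r S" by (rule inj_on_inverseI[of _ ri]) simp
  have R: "\<And>G. sum G (r ` S) = (\<Sum>v\<in>S. G (r v))" using sum.reindex[OF inj] by (simp add: comp_def)
  show ?thesis by (simp only: R)
qed

lemma rn_vfact: "rn r (vfact S D f) = vfact (r ` S) (\<lambda>w' v'. D (ri w') (ri v')) (rn r f)"
proof (rule poly_mapping_eqI)
  fix m
  have "Poly_Mapping.lookup (vfact (r ` S) (\<lambda>w' v'. D (ri w') (ri v')) (rn r f)) m =
    (\<Sum>v\<in>S. \<Sum>w\<in>S. D (ri (r w)) (ri (r v)) * tm m (r v) (r w) (rn r f))"
    unfolding lookup_vfact_tm by (rule sum2_reindex)
  also have "\<dots> = Poly_Mapping.lookup (rn r (vfact S D f)) m"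
    unfolding lookup_rn lookup_vfact_tm tm_r ri_r ..
  finally show "Poly_Mapping.lookup (rn r (vfact S D f)) m = Poly_Mapping.lookup (vfact (r ` S) (\<lambda>w' v'. D (ri w') (ri v')) (rn r f)) m" by simp
qed

lemma rn_add: "rn r (f + g) = rn r f + rn r g"
  by (rule poly_mapping_eqI) (simp add: lookup_rn lookup_add)

lemma rn_psmult: "rn r (psmult c f) = psmult c (rn r f)"
  by (rule poly_mapping_eqI) (simp add: lookup_rn lookup_psmult)

lemma mk_inv: "Poly_Mapping.map_key r (Poly_Mapping.map_key ri m) = m"
proof -
  interpret b2: bpair ri r by unfold_locales simp_all
  show ?thesis by (rule poly_mapping_eqI) (simp add: lookup_mk b2.lookup_mk)
qed

lemma keys_rn: "m \<in> Poly_Mapping.keys (rn r f) \<longleftrightarrow> Poly_Mapping.map_key r m \<in> Poly_Mapping.keys f"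
  by (simp add: in_keys_iff lookup_rn)

lemma keys_mk: "v \<in> Poly_Mapping.keys (Poly_Mapping.map_key r m) \<longleftrightarrow> r v \<in> Poly_Mapping.keys m"
  by (simp add: in_keys_iff lookup_mk)

end

lemma blkdeg_mk:
  fixes r :: "(nat \<times> 'u) \<Rightarrow> (nat \<times> 't)"
  assumes bp: "bpair r ri" and sn: "\<And>v. snd (r v) = t \<longleftrightarrow> snd v = u"
  shows "blkdeg (Poly_Mapping.map_key r m) u = blkdeg m t"
proof -
  interpret bpair r ri by (rule bp)
  have inj: "inj_on r A" for A by (rule inj_on_inverseI[of _ ri]) simp
  have eq: "{v \<in> Poly_Mapping.keys m. snd v = t} = r ` {v \<in> Poly_Mapping.keys (Poly_Mapping.map_key r m). snd v = u}"
  proof (rule set_eqI, rule iffI)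
    fix x assume "x \<in> {v \<in> Poly_Mapping.keys m. snd v = t}"
    then have "ri x \<in> {v \<in> Poly_Mapping.keys (Poly_Mapping.map_key r m). snd v = u}"
      using sn[of "ri x"] by (simp add: keys_mk)
    then show "x \<in> r ` {v \<in> Poly_Mapping.keys (Poly_Mapping.map_key r m). snd v = u}"
      by (metis r_ri imageI)
  next
    fix x assume "x \<in> r ` {v \<in> Poly_Mapping.keys (Poly_Mapping.map_key r m). snd v = u}"
    then obtain y where "y \<in> {v \<in> Poly_Mapping.keys (Poly_Mapping.map_key r m). snd v = u}" "x = r y" by blast
    then show "x \<in> {v \<in> Poly_Mapping.keys m. snd v = t}" using sn[of y] by (simp add: keys_mk)
  qed
  show ?thesis unfolding blkdeg_def eq by (simp add: sum.reindex[OF inj] lookup_mk)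
qed



fun tr :: "uidx \<Rightarrow> tidx" where
  "tr Z = S0" | "tr (P i) = L2 i" | "tr (M i) = L1 i"
fun ut :: "tidx \<Rightarrow> uidx" where
  "ut S0 = Z" | "ut (L2 i) = P i" | "ut (L1 i) = M i"

lemma ut_tr[simp]: "ut (tr u) = u" by (cases u) auto
lemma tr_ut[simp]: "tr (ut t) = t" by (cases t) auto

definition rho :: "nat \<times> uidx \<Rightarrow> nat \<times> tidx" where "rho x = (fst x, tr (snd x))"
definition rhoi :: "nat \<times> tidx \<Rightarrow> nat \<times> uidx" where "rhoi x = (fst x, ut (snd x))"

lemma fst_rho[simp]: "fst (rho x) = fst x" and snd_rho[simp]: "snd (rho x) = tr (snd x)"
  and fst_rhoi[simp]: "fst (rhoi y) = fst y" and snd_rhoi[simp]: "snd (rhoi y) = ut (snd y)"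
  by (simp_all add: rho_def rhoi_def)

interpretation R: bpair rho rhoi by unfold_locales (simp_all add: rho_def rhoi_def)
interpretation RI: bpair rhoi rho by unfold_locales (simp_all add: rho_def rhoi_def)

lemma rho_EU: "rho ` EUvars e k = ETvars e k"
proof (rule set_eqI, rule iffI)
  fix y assume "y \<in> rho ` EUvars e k" then show "y \<in> ETvars e k"
    by (auto simp: EUvars_def ETvars_def Uidx_def Tidx_def rho_def)
next
  fix y assume y: "y \<in> ETvars e k"
  have "rhoi y \<in> EUvars e k" using y
    by (cases "snd y") (auto simp: EUvars_def ETvars_def Uidx_def Tidx_def rhoi_def)
  then show "y \<in> rho ` EUvars e k" by (metis R.r_ri imageI)
qed

lemma mem_EU: "rho v \<in> ETvars e k \<longleftrightarrow> v \<in> EUvars e k"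
  using rho_EU[of e k] R.inj_r by (metis inj_image_mem_iff)

lemma glE_rho: "(\<lambda>w' v'. glE_on A (rhoi w') (rhoi v')) = glE_on A"
proof (intro ext)
  fix w' v' :: "nat \<times> tidx"
  have "ut (snd w') = ut (snd v') \<longleftrightarrow> snd w' = snd v'" by (metis tr_ut)
  then show "glE_on A (rhoi w') (rhoi v') = glE_on A w' v'" by (simp add: glE_on_def)
qed

lemma mk_inv_a: "Poly_Mapping.map_key rho (Poly_Mapping.map_key rhoi (k::nat \<times> uidx \<Rightarrow>\<^sub>0 nat)) = k"
  by (rule R.mk_inv)
lemma mk_inv_b: "Poly_Mapping.map_key rhoi (Poly_Mapping.map_key rho (k::nat \<times> tidx \<Rightarrow>\<^sub>0 nat)) = k"
  by (rule RI.mk_inv)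

definition Wchar :: "nat \<Rightarrow> nat \<Rightarrow> (nat \<Rightarrow> int) \<Rightarrow> (nat \<times> uidx) cpoly set" where
  "Wchar e k \<chi> = {f \<in> Vspace e k. \<forall>m \<in> Poly_Mapping.keys f. \<forall>i<k.
      int (blkdeg m (P i)) = int (blkdeg m (M i)) + \<chi> i}"

lemma lkchar: "rn rho f \<in> Lspace e k \<chi> \<longleftrightarrow> f \<in> Wchar e k \<chi>"
proof -
  have kk: "Poly_Mapping.keys m' \<subseteq> ETvars e k \<longleftrightarrow> Poly_Mapping.keys (Poly_Mapping.map_key rho m') \<subseteq> EUvars e k" for m'
  proof
    assume "Poly_Mapping.keys m' \<subseteq> ETvars e k" then show "Poly_Mapping.keys (Poly_Mapping.map_key rho m') \<subseteq> EUvars e k"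
      using mem_EU by (auto simp: R.keys_mk)
  next
    assume a: "Poly_Mapping.keys (Poly_Mapping.map_key rho m') \<subseteq> EUvars e k"
    show "Poly_Mapping.keys m' \<subseteq> ETvars e k"
    proof
      fix y assume "y \<in> Poly_Mapping.keys m'"
      then have "rhoi y \<in> Poly_Mapping.keys (Poly_Mapping.map_key rho m')" by (simp add: R.keys_mk)
      then have "rhoi y \<in> EUvars e k" using a by blast
      then show "y \<in> ETvars e k" using mem_EU[of "rhoi y"] by simp
    qed
  qed
  have b2: "blkdeg (Poly_Mapping.map_key rho m') (P i) = blkdeg m' (L2 i)" for m' i
    by (rule blkdeg_mk[OF R.bpair_axioms]) (metis snd_rho tr.simps(2) ut.simps(2) ut_tr)
  have b1: "blkdeg (Poly_Mapping.map_key rho m') (M i) = blkdeg m' (L1 i)" for m' i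
    by (rule blkdeg_mk[OF R.bpair_axioms]) (metis snd_rho tr.simps(3) ut.simps(3) ut_tr)
  define Q where "Q m = (Poly_Mapping.keys m \<subseteq> EUvars e k \<and> (\<forall>i<k.
      int (blkdeg m (P i)) = int (blkdeg m (M i)) + \<chi> i))" for m
  have "rn rho f \<in> Lspace e k \<chi> \<longleftrightarrow> (\<forall>m'. Poly_Mapping.map_key rho m' \<in> Poly_Mapping.keys f \<longrightarrow> Q (Poly_Mapping.map_key rho m'))"
    unfolding Lspace_def polys_in_def mem_Collect_eq Ball_def R.keys_rn kk b1 b2 Q_def by blast
  also have "\<dots> \<longleftrightarrow> (\<forall>m \<in> Poly_Mapping.keys f. Q m)"
  proof
    assume H: "\<forall>m'. Poly_Mapping.map_key rho m' \<in> Poly_Mapping.keys f \<longrightarrow> Q (Poly_Mapping.map_key rho m')"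
    show "\<forall>m \<in> Poly_Mapping.keys f. Q m"
    proof
      fix m assume "m \<in> Poly_Mapping.keys f"
      then show "Q m" using H[rule_format, of "Poly_Mapping.map_key rhoi m"] by (simp add: mk_inv_a)
    qed
  qed blast
  also have "\<dots> \<longleftrightarrow> f \<in> Wchar e k \<chi>"
    unfolding Wchar_def Vspace_def polys_in_def Q_def by blast
  finally show ?thesis .
qed

lemma rn_inv1: "rn rho (rn rhoi g) = g"
  by (rule poly_mapping_eqI) (simp add: R.lookup_rn RI.lookup_rn mk_inv_b)
lemma rn_inv2: "rn rhoi (rn rho f) = f"
  by (rule poly_mapping_eqI) (simp add: R.lookup_rn RI.lookup_rn mk_inv_a)



lemma finite_Uidx[simp]: "finite (Uidx k)" by (simp add: Uidx_def)
lemma finite_EU[simp]: "finite (EUvars e k)" by (simp add: EUvars_def)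

lemma diag_sum1:
  assumes "finite A" "u \<in> A" "\<And>w. w \<noteq> u \<Longrightarrow> X w u = 0"
  shows "(\<Sum>w\<in>A. X w u * c w) = (X u u * c u :: complex)"
proof -
  have "(\<Sum>w\<in>A. X w u * c w) = (\<Sum>w\<in>A. if w = u then X u u * c u else 0)"
    by (rule sum.cong) (auto simp: assms(3))
  then show ?thesis using assms(1,2) by simp
qed

lemma diag_sum2:
  assumes "finite A" "u \<in> A" "\<And>w. w \<noteq> u \<Longrightarrow> X w u = 0"
  shows "(\<Sum>w\<in>A. c w * X w u) = (c u * X u u :: complex)"
proof -
  have "(\<Sum>w\<in>A. c w * X w u) = (\<Sum>w\<in>A. if w = u then c u * X u u else 0)"
    by (rule sum.cong) (auto simp: assms(3))
  then show ?thesis using assms(1,2) by simp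
qed

lemma Z_in[simp]: "Z \<in> Uidx k" by (simp add: Uidx_def)
lemma P_in[simp]: "P i \<in> Uidx k \<longleftrightarrow> i < k" by (auto simp: Uidx_def)
lemma M_in[simp]: "M i \<in> Uidx k \<longleftrightarrow> i < k" by (auto simp: Uidx_def)

lemma skew_diag:
  assumes "\<And>u v. u \<noteq> v \<Longrightarrow> X u v = 0" "u \<in> Uidx k" "v \<in> Uidx k"
  shows "(\<Sum>w\<in>Uidx k. X w u * Bform w v) + (\<Sum>w\<in>Uidx k. Bform u w * X w v)
     = X u u * Bform u v + Bform u v * X v v"
  using diag_sum1[of "Uidx k" u X "\<lambda>w. Bform w v"] diag_sum2[of "Uidx k" v X "\<lambda>w. Bform u w"] assms
  by simp

lemma cartan_offdiag: "X \<in> cartan k \<Longrightarrow> u \<noteq> v \<Longrightarrow> X u v = 0"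
  by (simp add: cartan_def)

lemma cartan_Z: assumes "X \<in> cartan k" shows "X Z Z = 0"
proof -
  have "(\<Sum>w\<in>Uidx k. X w Z * Bform w Z) + (\<Sum>w\<in>Uidx k. Bform Z w * X w Z) = 0"
    using assms by (simp add: cartan_def soU_def)
  then show ?thesis using skew_diag[of X Z k Z] cartan_offdiag[OF assms] by simp
qed

lemma cartan_M: assumes "X \<in> cartan k" "i < k" shows "X (M i) (M i) = - X (P i) (P i)"
proof -
  have "(\<Sum>w\<in>Uidx k. X w (P i) * Bform w (M i)) + (\<Sum>w\<in>Uidx k. Bform (P i) w * X w (M i)) = 0"
    using assms by (simp add: cartan_def soU_def)
  then have "X (P i) (P i) + X (M i) (M i) = 0"
    using skew_diag[of X "P i" k "M i"] cartan_offdiag[OF assms(1)] assms(2) by simp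
  then show ?thesis by (simp add: eq_neg_iff_add_eq_0 add.commute)
qed

definition Xd :: "nat \<Rightarrow> uidx \<Rightarrow> uidx \<Rightarrow> complex" where
  "Xd j u v = (if u = v then (if u = P j then 1 else if u = M j then -1 else 0) else 0)"

lemma Xd_cartan: assumes "j < k" shows "Xd j \<in> cartan k"
proof -
  have od: "\<And>u v. u \<noteq> v \<Longrightarrow> Xd j u v = 0" by (simp add: Xd_def)
  have supp: "\<forall>u v. (u \<notin> Uidx k \<or> v \<notin> Uidx k) \<longrightarrow> Xd j u v = 0"
    using assms by (auto simp: Xd_def)
  have sk: "(\<Sum>w\<in>Uidx k. Xd j w u * Bform w v) + (\<Sum>w\<in>Uidx k. Bform u w * Xd j w v) = 0"
    if "u \<in> Uidx k" "v \<in> Uidx k" for u v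
  proof -
    have "Xd j u u * Bform u v + Bform u v * Xd j v v = 0"
      by (cases u; cases v) (auto simp: Xd_def)
    then show ?thesis using skew_diag[of "Xd j" u k v, OF od that] by simp
  qed
  show ?thesis unfolding cartan_def soU_def using supp sk od by blast
qed

lemma shift_cancel: assumes "0 < Poly_Mapping.lookup m v"
  shows "m - Poly_Mapping.single v 1 + Poly_Mapping.single v (1::nat) = m"
  by (rule poly_mapping_eqI) (use assms in \<open>auto simp: lookup_add lookup_minus lookup_single when_def\<close>)

lemma vfact_diag:
  assumes X: "X \<in> cartan k"
  shows "Poly_Mapping.lookup (vfact (EUvars e k) (soU_on X) f) m =
    (\<Sum>v\<in>EUvars e k. X (snd v) (snd v) * of_nat (Poly_Mapping.lookup m v)) * Poly_Mapping.lookup f m"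
proof -
  let ?S = "EUvars e k"
  define T where "T v w = (if 0 < Poly_Mapping.lookup m w then of_nat (Suc (Poly_Mapping.lookup (m - Poly_Mapping.single w 1) v)) *
        Poly_Mapping.lookup f (m - Poly_Mapping.single w 1 + Poly_Mapping.single v 1) else (0::complex))" for v w
  have od: "soU_on X w v = 0" if "w \<noteq> v" for w v
    using that cartan_offdiag[OF X, of "snd w" "snd v"] by (cases w; cases v) (auto simp: soU_on_def)
  have inner: "(\<Sum>w\<in>?S. soU_on X w v * T v w) = X (snd v) (snd v) * (of_nat (Poly_Mapping.lookup m v) * Poly_Mapping.lookup f m)"
    if "v \<in> ?S" for v
  proof -
    have "(\<Sum>w\<in>?S. soU_on X w v * T v w) = soU_on X v v * T v v"
      by (rule diag_sum1[where X = "soU_on X"]) (use that od in auto)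
    also have "T v v = of_nat (Poly_Mapping.lookup m v) * Poly_Mapping.lookup f m"
    proof (cases "0 < Poly_Mapping.lookup m v")
      case True
      have "Poly_Mapping.lookup (m - Poly_Mapping.single v 1) v = Poly_Mapping.lookup m v - 1"
        by (simp add: lookup_minus)
      then show ?thesis unfolding T_def using True shift_cancel[OF True] by simp
    next
      case False then show ?thesis unfolding T_def by simp
    qed
    finally show ?thesis by (simp add: soU_on_def)
  qed
  have "Poly_Mapping.lookup (vfact ?S (soU_on X) f) m = (\<Sum>v\<in>?S. \<Sum>w\<in>?S. soU_on X w v * T v w)"
    unfolding lookup_vfact T_def ..
  also have "\<dots> = (\<Sum>v\<in>?S. X (snd v) (snd v) * (of_nat (Poly_Mapping.lookup m v) * Poly_Mapping.lookup f m))"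
    by (rule sum.cong[OF refl]) (rule inner)
  also have "\<dots> = (\<Sum>v\<in>?S. X (snd v) (snd v) * of_nat (Poly_Mapping.lookup m v)) * Poly_Mapping.lookup f m"
    by (simp add: sum_distrib_right mult.assoc)
  finally show ?thesis .
qed

lemma blkdeg_sup:
  assumes "finite F" "{x \<in> Poly_Mapping.keys m. snd x = u} \<subseteq> F" "\<And>x. x \<in> F \<Longrightarrow> snd x = u"
  shows "blkdeg m u = sum (Poly_Mapping.lookup m) F"
  unfolding blkdeg_def
proof (rule sum.mono_neutral_left[OF assms(1,2)])
  show "\<forall>i\<in>F - {x \<in> Poly_Mapping.keys m. snd x = u}. Poly_Mapping.lookup m i = 0"
    using assms(3) by (auto simp: in_keys_iff)
qed

lemma blkdeg_rect:
  assumes "Poly_Mapping.keys m \<subseteq> {..<e} \<times> B"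
  shows "blkdeg m u = (\<Sum>a<e. Poly_Mapping.lookup m (a, u))"
proof -
  have "blkdeg m u = sum (Poly_Mapping.lookup m) ({..<e} \<times> {u})"
    by (rule blkdeg_sup) (use assms in auto)
  also have "\<dots> = (\<Sum>a<e. Poly_Mapping.lookup m (a, u))"
    unfolding sum.cartesian_product' by simp
  finally show ?thesis .
qed

lemma wsum:
  assumes X: "X \<in> cartan k" and km: "Poly_Mapping.keys m \<subseteq> EUvars e k"
  shows "(\<Sum>v\<in>EUvars e k. X (snd v) (snd v) * of_nat (Poly_Mapping.lookup m v)) =
     (\<Sum>i<k. X (P i) (P i) * (of_nat (blkdeg m (P i)) - of_nat (blkdeg m (M i))))"
proof -
  define b where "b u = (of_nat (blkdeg m u) :: complex)" for u
  have "(\<Sum>v\<in>EUvars e k. X (snd v) (snd v) * of_nat (Poly_Mapping.lookup m v)) =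
      (\<Sum>a<e. \<Sum>u\<in>Uidx k. X u u * of_nat (Poly_Mapping.lookup m (a, u)))"
    unfolding EUvars_def by (simp add: sum.cartesian_product')
  also have "\<dots> = (\<Sum>u\<in>Uidx k. \<Sum>a<e. X u u * of_nat (Poly_Mapping.lookup m (a, u)))"
    by (rule sum.swap)
  also have "\<dots> = (\<Sum>u\<in>Uidx k. X u u * b u)"
  proof (rule sum.cong[OF refl])
    fix u
    have "blkdeg m u = (\<Sum>a<e. Poly_Mapping.lookup m (a, u))"
      by (rule blkdeg_rect) (use km in \<open>simp add: EUvars_def\<close>)
    then show "(\<Sum>a<e. X u u * of_nat (Poly_Mapping.lookup m (a, u))) = X u u * b u"
      by (simp add: b_def sum_distrib_left)
  qed
  also have "\<dots> = (\<Sum>i<k. X (P i) (P i) * (b (P i) - b (M i)))"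
  proof -
    have U: "Uidx k = insert Z (P ` {..<k} \<union> M ` {..<k})" by (auto simp: Uidx_def)
    have d: "(P ` {..<k}) \<inter> (M ` {..<k}) = {}" by auto
    have iP: "inj_on P A" for A by (simp add: inj_on_def)
    have iM: "inj_on M A" for A by (simp add: inj_on_def)
    have "(\<Sum>u\<in>Uidx k. X u u * b u) = X Z Z * b Z + ((\<Sum>u\<in>P ` {..<k}. X u u * b u) + (\<Sum>u\<in>M ` {..<k}. X u u * b u))"
      unfolding U by (subst sum.insert) (auto simp: sum.union_disjoint[OF _ _ d])
    also have "\<dots> = (\<Sum>i<k. X (P i) (P i) * b (P i)) + (\<Sum>i<k. X (M i) (M i) * b (M i))"
      using cartan_Z[OF X] by (simp add: sum.reindex[OF iP] sum.reindex[OF iM])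
    also have "(\<Sum>i<k. X (M i) (M i) * b (M i)) = (\<Sum>i<k. - (X (P i) (P i) * b (M i)))"
      by (rule sum.cong[OF refl]) (simp add: cartan_M[OF X])
    finally show ?thesis by (simp add: sum_negf[symmetric] right_diff_distrib sum_subtractf)
  qed
  finally show ?thesis by (simp add: b_def)
qed



lemma wcond:
  assumes X: "X \<in> cartan k" and f: "f \<in> Vspace e k"
  shows "vfact (EUvars e k) (soU_on X) f = psmult (wt k \<chi> X) f \<longleftrightarrow>
    (\<forall>m \<in> Poly_Mapping.keys f. (\<Sum>i<k. X (P i) (P i) * (of_nat (blkdeg m (P i)) - of_nat (blkdeg m (M i)))) = wt k \<chi> X)"
proof -
  define W where "W m = (\<Sum>i<k. X (P i) (P i) * (of_nat (blkdeg m (P i)) - of_nat (blkdeg m (M i)) :: complex))" for m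
  have lk: "Poly_Mapping.lookup (vfact (EUvars e k) (soU_on X) f) m = W m * Poly_Mapping.lookup f m" for m
  proof (cases "m \<in> Poly_Mapping.keys f")
    case True
    then have km: "Poly_Mapping.keys m \<subseteq> EUvars e k" using f by (simp add: Vspace_def polys_in_def)
    show ?thesis unfolding vfact_diag[OF X] wsum[OF X km] W_def ..
  next
    case False
    then show ?thesis unfolding vfact_diag[OF X] by (simp add: in_keys_iff)
  qed
  have "vfact (EUvars e k) (soU_on X) f = psmult (wt k \<chi> X) f \<longleftrightarrow>
      (\<forall>m. W m * Poly_Mapping.lookup f m = wt k \<chi> X * Poly_Mapping.lookup f m)"
    by (simp add: poly_mapping_eq_iff fun_eq_iff lk lookup_psmult)
  also have "\<dots> \<longleftrightarrow> (\<forall>m \<in> Poly_Mapping.keys f. W m = wt k \<chi> X)"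
    by (auto simp: in_keys_iff)
  finally show ?thesis unfolding W_def .
qed

lemma Vweight_Wchar: "Vweight e k \<chi> = Wchar e k \<chi>"
proof (rule set_eqI)
  fix f
  show "f \<in> Vweight e k \<chi> \<longleftrightarrow> f \<in> Wchar e k \<chi>"
  proof (cases "f \<in> Vspace e k")
    case False then show ?thesis by (simp add: Vweight_def Wchar_def)
  next
    case f: True
    have "f \<in> Vweight e k \<chi> \<longleftrightarrow> (\<forall>X \<in> cartan k. \<forall>m \<in> Poly_Mapping.keys f.
        (\<Sum>i<k. X (P i) (P i) * (of_nat (blkdeg m (P i)) - of_nat (blkdeg m (M i)))) = wt k \<chi> X)"
      using wcond[OF _ f] f by (simp add: Vweight_def)
    also have "\<dots> \<longleftrightarrow> (\<forall>m \<in> Poly_Mapping.keys f. \<forall>i<k. int (blkdeg m (P i)) = int (blkdeg m (M i)) + \<chi> i)"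
    proof
      assume H: "\<forall>X \<in> cartan k. \<forall>m \<in> Poly_Mapping.keys f.
        (\<Sum>i<k. X (P i) (P i) * (of_nat (blkdeg m (P i)) - of_nat (blkdeg m (M i)))) = wt k \<chi> X"
      show "\<forall>m \<in> Poly_Mapping.keys f. \<forall>i<k. int (blkdeg m (P i)) = int (blkdeg m (M i)) + \<chi> i"
      proof (intro ballI allI impI)
        fix m i assume m: "m \<in> Poly_Mapping.keys f" and i: "i < k"
        have h: "(\<Sum>j<k. Xd i (P j) (P j) * (of_nat (blkdeg m (P j)) - of_nat (blkdeg m (M j)))) = wt k \<chi> (Xd i)"
          using H Xd_cartan[OF i] m by blast
        have l: "(\<Sum>j<k. Xd i (P j) (P j) * (of_nat (blkdeg m (P j)) - of_nat (blkdeg m (M j)) :: complex))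
            = of_nat (blkdeg m (P i)) - of_nat (blkdeg m (M i))"
        proof -
          have "(\<Sum>j<k. Xd i (P j) (P j) * (of_nat (blkdeg m (P j)) - of_nat (blkdeg m (M j)) :: complex))
            = (\<Sum>j<k. if j = i then of_nat (blkdeg m (P i)) - of_nat (blkdeg m (M i)) else 0)"
            by (rule sum.cong) (auto simp: Xd_def)
          then show ?thesis using i by simp
        qed
        have r: "wt k \<chi> (Xd i) = of_int (\<chi> i)"
        proof -
          have "wt k \<chi> (Xd i) = (\<Sum>j<k. if j = i then of_int (\<chi> i) else 0)"
            unfolding wt_def by (rule sum.cong) (auto simp: Xd_def)
          then show ?thesis using i by simp
        qed
        have "(of_int (int (blkdeg m (P i))) :: complex) = of_int (int (blkdeg m (M i)) + \<chi> i)"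
          using h l r by (simp add: algebra_simps)
        then show "int (blkdeg m (P i)) = int (blkdeg m (M i)) + \<chi> i" by (rule of_int_eq_iff[THEN iffD1])
      qed
    next
      assume H: "\<forall>m \<in> Poly_Mapping.keys f. \<forall>i<k. int (blkdeg m (P i)) = int (blkdeg m (M i)) + \<chi> i"
      show "\<forall>X \<in> cartan k. \<forall>m \<in> Poly_Mapping.keys f.
        (\<Sum>i<k. X (P i) (P i) * (of_nat (blkdeg m (P i)) - of_nat (blkdeg m (M i)))) = wt k \<chi> X"
      proof (intro ballI)
        fix X m assume m: "m \<in> Poly_Mapping.keys f"
        have "(of_nat (blkdeg m (P i)) - of_nat (blkdeg m (M i)) :: complex) = of_int (\<chi> i)" if "i < k" for i
        proof -
          have "(of_int (int (blkdeg m (P i))) :: complex) = of_int (int (blkdeg m (M i)) + \<chi> i)"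
            using H m that by simp
          then show ?thesis by simp
        qed
        then show "(\<Sum>i<k. X (P i) (P i) * (of_nat (blkdeg m (P i)) - of_nat (blkdeg m (M i)))) = wt k \<chi> X"
          unfolding wt_def by (intro sum.cong) (auto simp: mult.commute)
      qed
    qed
    finally show ?thesis using f by (simp add: Wchar_def)
  qed
qed

lemma keys_vfact:
  assumes "m \<in> Poly_Mapping.keys (vfact S D f)"
  shows "\<exists>v\<in>S. \<exists>w\<in>S. D w v \<noteq> 0 \<and> 0 < Poly_Mapping.lookup m w \<and>
     m - Poly_Mapping.single w 1 + Poly_Mapping.single v 1 \<in> Poly_Mapping.keys f"
proof -
  have "Poly_Mapping.lookup (vfact S D f) m \<noteq> 0" using assms by (simp add: in_keys_iff)
  then obtain v where v: "v \<in> S" and "(\<Sum>w\<in>S. D w v *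
    (if 0 < Poly_Mapping.lookup m w then of_nat (Suc (Poly_Mapping.lookup (m - Poly_Mapping.single w 1) v)) *
        Poly_Mapping.lookup f (m - Poly_Mapping.single w 1 + Poly_Mapping.single v 1) else 0)) \<noteq> 0"
    unfolding lookup_vfact by (blast elim: sum.not_neutral_contains_not_neutral)
  then obtain w where w: "w \<in> S" and "D w v *
    (if 0 < Poly_Mapping.lookup m w then of_nat (Suc (Poly_Mapping.lookup (m - Poly_Mapping.single w 1) v)) *
        Poly_Mapping.lookup f (m - Poly_Mapping.single w 1 + Poly_Mapping.single v 1) else 0) \<noteq> 0"
    by (blast elim: sum.not_neutral_contains_not_neutral)
  then have "D w v \<noteq> 0 \<and> 0 < Poly_Mapping.lookup m w \<and>
     m - Poly_Mapping.single w 1 + Poly_Mapping.single v 1 \<in> Poly_Mapping.keys f"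
    by (auto simp: in_keys_iff split: if_splits)
  then show ?thesis using v w by blast
qed

lemma blkdeg_add: "blkdeg (m + Poly_Mapping.single v 1) u = blkdeg m u + (if snd v = u then 1 else 0)"
proof -
  define F where "F = {x \<in> Poly_Mapping.keys m \<union> {v}. snd x = u}"
  have fF: "finite F" by (simp add: F_def)
  have "blkdeg m u = sum (Poly_Mapping.lookup m) F"
    by (rule blkdeg_sup[OF fF]) (auto simp: F_def)
  moreover have "blkdeg (m + Poly_Mapping.single v 1) u = sum (Poly_Mapping.lookup (m + Poly_Mapping.single v 1)) F"
  proof (rule blkdeg_sup[OF fF])
    show "{x \<in> Poly_Mapping.keys (m + Poly_Mapping.single v 1). snd x = u} \<subseteq> F"
      using keys_add[of m "Poly_Mapping.single v (1::nat)"] by (auto simp: F_def)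
  qed (auto simp: F_def)
  moreover have "sum (Poly_Mapping.lookup (Poly_Mapping.single v (1::nat))) F = (if snd v = u then 1 else 0)"
    unfolding lookup_single when_def using fF by (simp add: F_def)
  ultimately show ?thesis by (simp add: lookup_add sum.distrib)
qed

lemma gl_pres:
  assumes f: "f \<in> Wchar e k \<chi>"
  shows "vfact (EUvars e k) (glE_on A) f \<in> Wchar e k \<chi>"
proof -
  let ?S = "EUvars e k"
  have "Poly_Mapping.keys m \<subseteq> ?S \<and> (\<forall>i<k. int (blkdeg m (P i)) = int (blkdeg m (M i)) + \<chi> i)"
    if m: "m \<in> Poly_Mapping.keys (vfact ?S (glE_on A) f)" for m
  proof -
    obtain v w where v: "v \<in> ?S" and w: "w \<in> ?S" and D: "glE_on A w v \<noteq> 0"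
      and pos: "0 < Poly_Mapping.lookup m w"
      and m': "m - Poly_Mapping.single w 1 + Poly_Mapping.single v 1 \<in> Poly_Mapping.keys f"
      using keys_vfact[OF m] by blast
    define m' where "m' = m - Poly_Mapping.single w 1 + Poly_Mapping.single v 1"
    have sn: "snd w = snd v" using D by (simp add: glE_on_def split: if_splits)
    have k': "Poly_Mapping.keys m' \<subseteq> ?S" and c': "\<forall>i<k. int (blkdeg m' (P i)) = int (blkdeg m' (M i)) + \<chi> i"
      using f m' unfolding m'_def by (auto simp: Wchar_def Vspace_def polys_in_def)
    have "Poly_Mapping.keys m \<subseteq> ?S"
    proof
      fix x assume x: "x \<in> Poly_Mapping.keys m"
      show "x \<in> ?S"
      proof (cases "x = w")
        case True then show ?thesis using w by simp
      next
        case False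
        then have "Poly_Mapping.lookup m' x \<ge> Poly_Mapping.lookup m x"
          by (simp add: m'_def lookup_add lookup_minus lookup_single when_def)
        then have "x \<in> Poly_Mapping.keys m'" using x by (auto simp: in_keys_iff)
        then show ?thesis using k' by blast
      qed
    qed
    moreover have "blkdeg m u = blkdeg m' u" for u
    proof -
      have "blkdeg m u = blkdeg (m - Poly_Mapping.single w 1) u + (if snd w = u then 1 else 0)"
        using blkdeg_add[of "m - Poly_Mapping.single w 1" w u] shift_cancel[OF pos] by simp
      also have "\<dots> = blkdeg m' u" unfolding m'_def blkdeg_add sn ..
      finally show ?thesis .
    qed
    ultimately show ?thesis using c' by simp
  qed
  moreover have "vfact ?S (glE_on A) f \<in> polys_in ?S" using calculation by (simp add: polys_in_def)
  ultimately show ?thesis by (simp add: Wchar_def Vspace_def)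
qed

theorem mainTheorem8:
  fixes e k :: nat and \<chi> :: "nat \<Rightarrow> int"
  assumes "k \<ge> 1"
  shows "\<exists>\<phi> :: (nat \<times> uidx) cpoly \<Rightarrow> (nat \<times> tidx) cpoly.
     bij_betw \<phi> (Vweight e k \<chi>) (Lspace e k \<chi>) \<and>
     (\<forall>f\<in>Vweight e k \<chi>. \<forall>g\<in>Vweight e k \<chi>. \<phi> (f + g) = \<phi> f + \<phi> g) \<and>
     (\<forall>c. \<forall>f\<in>Vweight e k \<chi>. \<phi> (psmult c f) = psmult c (\<phi> f)) \<and>
     (\<forall>A. \<forall>f\<in>Vweight e k \<chi>.
        vfact (EUvars e k) (glE_on A) f \<in> Vweight e k \<chi> \<and>
        \<phi> (vfact (EUvars e k) (glE_on A) f) = vfact (ETvars e k) (glE_on A) (\<phi> f))"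
proof (intro exI[of _ "rn rho"] conjI ballI allI)
  show "bij_betw (rn rho) (Vweight e k \<chi>) (Lspace e k \<chi>)"
  proof (rule bij_betw_byWitness[where f' = "rn rhoi"])
    show "\<forall>a\<in>Vweight e k \<chi>. rn rhoi (rn rho a) = a" by (simp add: rn_inv2)
    show "\<forall>a'\<in>Lspace e k \<chi>. rn rho (rn rhoi a') = a'" by (simp add: rn_inv1)
    show "rn rho ` Vweight e k \<chi> \<subseteq> Lspace e k \<chi>" using lkchar Vweight_Wchar by blast
    show "rn rhoi ` Lspace e k \<chi> \<subseteq> Vweight e k \<chi>"
    proof
      fix y assume "y \<in> rn rhoi ` Lspace e k \<chi>"
      then obtain g where g: "g \<in> Lspace e k \<chi>" "y = rn rhoi g" by blast
      then have "rn rho y \<in> Lspace e k \<chi>" by (simp add: rn_inv1)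
      then show "y \<in> Vweight e k \<chi>" using lkchar Vweight_Wchar by blast
    qed
  qed
next
  fix f g show "rn rho (f + g) = rn rho f + rn rho g" by (rule R.rn_add)
next
  fix c f show "rn rho (psmult c f) = psmult c (rn rho f)" by (rule R.rn_psmult)
next
  fix A f assume "f \<in> Vweight e k \<chi>"
  then show "vfact (EUvars e k) (glE_on A) f \<in> Vweight e k \<chi>"
    using gl_pres Vweight_Wchar by blast
next
  fix A f
  show "rn rho (vfact (EUvars e k) (glE_on A) f) = vfact (ETvars e k) (glE_on A) (rn rho f)"
    unfolding R.rn_vfact rho_EU glE_rho ..
qed


end
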